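(* Let $K$ be a twisted knot diagram with an even number of bars, and consider colorings of $K$ by the twisted biquandle $(\mathbb{Z}_{S(K)},\ a\ast b=a\circ b=a+1,\ f(a)=-a)$ (with $\mathbb{Z}_0=\mathbb{Z}$). For a coloring $F$ and a real crossing $c$ let $\mathrm{Ind}_F(c)=y-x\in\mathbb{Z}_{S(K)}$. Then: (i) if $c\in C_e(K)$, $\mathrm{Ind}_F(c)$ does not depend on the coloring $F$; (ii) if $c\in C_o(K)$, then as $F$ ranges over all colorings, the set of values $\{\mathrm{Ind}_F(c)\}$ is exactly the set of all even elements or exactly the set of all odd elements of $\mathbb{Z}_{S(K)}$.
   Context: A twisted knot diagram is a virtual knot diagram with finitely many bars on its edges. With $2n$ bars cutting $K$ into edges $e_1,\dots,e_{2n}$ (consecutive along the orientation), $s(e)=u_+(e)+o_-(e)-u_-(e)-o_+(e)$ where $o_\pm(e)$ (resp. $u_\pm(e)$) counts positive/negative crossings at which $e$ is the over- (resp. under-) strand, and $S(K)=\left|\sum_{i=1}^n s(e_{2i-1})-\sum_{i=1}^n s(e_{2i})\right|$ ($S(K)=0$ if no bars); $S(K)$ is always even, so parity in $\mathbb{Z}_{S(K)}$ is well defined. Segments are the pieces between real crossings and bars. A coloring labels segments by elements of $\mathbb{Z}_{S(K)}$ so that at each real crossing, with $x$ the label of the under-strand segment to the right of the over-strand and $y$ the label of the over-strand segment to the right of the under-strand (right with respect to strand orientations), the other under-segment is labeled $x+1$ and the other over-segment $y+1$, and labels on the two sides of a bar are negatives of each other. In the Gauss diagram of $K$ (a circle with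 one chord per real crossing, with the bars marked as points on the circle), each chord $c$ splits the circle into two arcs; since the total number of bars is even, either both arcs contain an even number of bars ($c\in C_e(K)$) or both contain an odd number ($c\in C_o(K)$). *)

theory Defs
  imports "HOL-Number_Theory.Cong"
begin

text \<open>A (one-component) twisted knot diagram is encoded by its Gauss word with bars:
  a cyclic list of events met while travelling along the oriented knot.
  OverP c / UnderP c: passing real crossing c as over-/under-strand; Bar: passing a bar.
  Virtual crossings are irrelevant and omitted. The sign of crossing c is given by
  sg c (True = positive). Segment j (for j < length w) is the piece of the knot from
  event j to event (j+1) mod (length w); i.e. seg_out j = j, seg_in j = j-1 cyclically.\<close>

datatype ev = Bar | OverP nat | UnderP nat

definition wf_twisted :: "ev list \<Rightarrow> bool" where
  "wf_twisted w \<longleftrightarrow> (\<forall>c. count_list w (OverP c) = count_list w (UnderP c) \<and> count_list w (OverP c) \<le> 1)"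

definition nbars :: "ev list \<Rightarrow> nat" where
  "nbars w = count_list w Bar"

definition seg_in :: "ev list \<Rightarrow> nat \<Rightarrow> nat" where
  "seg_in w j = (j + length w - 1) mod length w"

definition bars_before :: "ev list \<Rightarrow> nat \<Rightarrow> nat" where
  "bars_before w j = count_list (take j w) Bar"

text \<open>Edges e_1..e_2n: the edge after the k-th bar is e_k; the wrap-around edge is e_2n.\<close>
definition edge_of :: "ev list \<Rightarrow> nat \<Rightarrow> nat" where
  "edge_of w j = (if bars_before w j = 0 then nbars w else bars_before w j)"

text \<open>Contribution of a passage to s(e) = u_+ + o_- - u_- - o_+.\<close>
definition passage_val :: "(nat \<Rightarrow> bool) \<Rightarrow> ev \<Rightarrow> int" where
  "passage_val sg e = (case e of Bar \<Rightarrow> 0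
      | OverP c \<Rightarrow> (if sg c then -1 else 1)
      | UnderP c \<Rightarrow> (if sg c then 1 else -1))"

definition s_edge :: "ev list \<Rightarrow> (nat \<Rightarrow> bool) \<Rightarrow> nat \<Rightarrow> int" where
  "s_edge w sg e = (\<Sum>j\<in>{j. j < length w \<and> w ! j \<noteq> Bar \<and> edge_of w j = e}. passage_val sg (w ! j))"

definition S_inv :: "ev list \<Rightarrow> (nat \<Rightarrow> bool) \<Rightarrow> int" where
  "S_inv w sg = (if nbars w = 0 then 0 else
     \<bar>(\<Sum>i\<in>{1..nbars w div 2}. s_edge w sg (2*i - 1)) - (\<Sum>i\<in>{1..nbars w div 2}. s_edge w sg (2*i))\<bar>)"

text \<open>Labels are integers read modulo S (congruence mod 0 is equality).
  At crossing c with over passage at p and under passage at q: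
  positive: x = under incoming, y = over outgoing; negative: x = under outgoing,
  y = over incoming.\<close>
definition coloring :: "ev list \<Rightarrow> (nat \<Rightarrow> bool) \<Rightarrow> (nat \<Rightarrow> int) \<Rightarrow> bool" where
  "coloring w sg F \<longleftrightarrow>
     (\<forall>j<length w. w ! j = Bar \<longrightarrow> [F j = - F (seg_in w j)] (mod S_inv w sg)) \<and>
     (\<forall>c p q. p < length w \<longrightarrow> q < length w \<longrightarrow> w ! p = OverP c \<longrightarrow> w ! q = UnderP c \<longrightarrow>
        (if sg c then
           [F q = F (seg_in w q) + 1] (mod S_inv w sg) \<and> [F (seg_in w p) = F p + 1] (mod S_inv w sg)
         else
           [F (seg_in w q) = F q + 1] (mod S_inv w sg) \<and> [F p = F (seg_in w p) + 1] (mod S_inv w sg)))"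

text \<open>Ind_F(c) = y - x in Z_S, for crossing c with over passage p and under passage q.\<close>
definition ind :: "ev list \<Rightarrow> (nat \<Rightarrow> bool) \<Rightarrow> (nat \<Rightarrow> int) \<Rightarrow> nat \<Rightarrow> nat \<Rightarrow> nat \<Rightarrow> int" where
  "ind w sg F c p q = (if sg c then F p - F (seg_in w q) else F (seg_in w p) - F q) mod S_inv w sg"

definition bars_between :: "ev list \<Rightarrow> nat \<Rightarrow> nat \<Rightarrow> nat" where
  "bars_between w p q = card {j. min p q < j \<and> j < max p q \<and> j < length w \<and> w ! j = Bar}"

definition C_e :: "ev list \<Rightarrow> nat set" where
  "C_e w = {c. \<exists>p q. p < length w \<and> q < length w \<and> w ! p = OverP c \<and> w ! q = UnderP c \<and> even (bars_between w p q)}"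

definition C_o :: "ev list \<Rightarrow> nat set" where
  "C_o w = {c. \<exists>p q. p < length w \<and> q < length w \<and> w ! p = OverP c \<and> w ! q = UnderP c \<and> odd (bars_between w p q)}"

end

theory Submission
  imports Defs
begin


definition stepf :: "(nat \<Rightarrow> bool) \<Rightarrow> ev \<Rightarrow> int \<Rightarrow> int" where
  "stepf sg e v = (case e of Bar \<Rightarrow> - v | _ \<Rightarrow> v + passage_val sg e)"

fun val :: "ev list \<Rightarrow> (nat \<Rightarrow> bool) \<Rightarrow> int \<Rightarrow> nat \<Rightarrow> int" where
  "val w sg x 0 = stepf sg (w ! 0) x"
| "val w sg x (Suc j) = stepf sg (w ! Suc j) (val w sg x j)"

lemma stepf_cong: "[a = b] (mod m) \<Longrightarrow> [stepf sg e a = stepf sg e b] (mod (m::int))"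
  by (cases e) (auto simp: stepf_def cong_minus_minus_iff intro: cong_add)

lemma bb_Suc: "j < length w \<Longrightarrow> bars_before w (Suc j) = bars_before w j + (if w ! j = Bar then 1 else 0)"
  by (simp add: bars_before_def take_Suc_conv_app_nth)

lemma bb_0[simp]: "bars_before w 0 = 0" by (simp add: bars_before_def)

lemma bb_len: "bars_before w (length w) = nbars w" by (simp add: bars_before_def nbars_def)

lemma bb_le: "bars_before w j \<le> nbars w"
proof -
  have "count_list w Bar = count_list (take j w) Bar + count_list (drop j w) Bar"
    by (metis append_take_drop_id count_list_append)
  then show ?thesis by (simp add: bars_before_def nbars_def)
qed

lemma stepf_nonbar: "e \<noteq> Bar \<Longrightarrow> stepf sg e v = v + passage_val sg e"
  by (cases e) (auto simp: stepf_def)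
lemma stepf_bar: "stepf sg Bar v = - v" by (simp add: stepf_def)

lemma val_affine: "j < length w \<Longrightarrow> val w sg x j = (-1) ^ bars_before w (Suc j) * x + val w sg 0 j"
proof (induction j)
  case 0
  then show ?case by (cases "w ! 0 = Bar") (auto simp: bb_Suc stepf_nonbar stepf_bar)
next
  case (Suc j)
  then show ?case
    by (cases "w ! Suc j = Bar") (auto simp: bb_Suc[of "Suc j"] stepf_nonbar stepf_bar algebra_simps)
qed

lemma val0_T: "j < length w \<Longrightarrow> val w sg 0 j = (-1) ^ bars_before w (Suc j) *
   (\<Sum>i\<le>j. (-1) ^ bars_before w i * passage_val sg (w ! i))"
proof (induction j)
  case 0
  then show ?case by (cases "w ! 0 = Bar") (auto simp: bb_Suc stepf_nonbar stepf_bar passage_val_def)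
next
  case (Suc j)
  then show ?case
    by (cases "w ! Suc j = Bar") (auto simp: bb_Suc[of "Suc j"] stepf_nonbar stepf_bar algebra_simps passage_val_def)
qed



fun swp :: "ev \<Rightarrow> ev" where
  "swp Bar = Bar" | "swp (OverP c) = UnderP c" | "swp (UnderP c) = OverP c"

lemma sum_list_map_count_int:
  "sum_list (map (f::ev \<Rightarrow> int) xs) = sum (\<lambda>x. int (count_list xs x) * f x) (set xs)"
proof(induction xs)
  case (Cons x xs)
  show ?case (is "?l = ?r")
  proof cases
    assume "x \<in> set xs"
    have "?l = f x + (\<Sum>x\<in>set xs. int (count_list xs x) * f x)" by (simp add: Cons.IH)
    also have "set xs = insert x (set xs - {x})" using \<open>x \<in> set xs\<close> by blast
    also have "f x + (\<Sum>x\<in>insert x (set xs - {x}). int (count_list xs x) * f x) = ?r"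
      by (simp add: sum.insert_remove eq_commute algebra_simps)
    finally show ?thesis .
  next
    assume "x \<notin> set xs"
    hence "\<And>xa. xa \<in> set xs \<Longrightarrow> x \<noteq> xa" by blast
    thus ?thesis by (simp add: Cons.IH \<open>x \<notin> set xs\<close>)
  qed
qed simp

lemma zero_sum:
  assumes wf: "wf_twisted w"
  shows "(\<Sum>i<length w. passage_val sg (w ! i)) = 0"
proof -
  have cnt: "count_list w (swp x) = count_list w x" for x
    using wf by (cases x) (auto simp: wf_twisted_def)
  have swpswp: "swp (swp x) = x" for x by (cases x) auto
  have pvs: "passage_val sg (swp x) = - passage_val sg x" for x
    by (cases x) (auto simp: passage_val_def)
  let ?h = "\<lambda>x. int (count_list w x) * passage_val sg x"
  have bij: "bij_betw swp (set w) (set w)"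
  proof (rule bij_betw_byWitness[where f' = swp])
    show "\<forall>a\<in>set w. swp (swp a) = a" by (simp add: swpswp)
    show "\<forall>a\<in>set w. swp (swp a) = a" by (simp add: swpswp)
    show "swp ` set w \<subseteq> set w"
      using cnt by (auto simp: count_list_0_iff[symmetric]) (metis count_list_0_iff)
    show "swp ` set w \<subseteq> set w"
      using cnt by (auto simp: count_list_0_iff[symmetric]) (metis count_list_0_iff)
  qed
  have "(\<Sum>x\<in>set w. ?h x) = (\<Sum>x\<in>set w. ?h (swp x))"
    using sum.reindex_bij_betw[OF bij, of ?h] by simp
  also have "\<dots> = - (\<Sum>x\<in>set w. ?h x)"
    by (simp add: cnt pvs sum_negf)
  finally have "(\<Sum>x\<in>set w. ?h x) = 0" by simp
  moreover have "(\<Sum>i<length w. passage_val sg (w ! i)) = sum_list (map (passage_val sg) w)"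
    by (simp add: sum_list_sum_nth atLeast0LessThan)
  moreover have "sum_list (map (passage_val sg) w) = (\<Sum>x\<in>set w. ?h x)"
    by (rule sum_list_map_count_int)
  ultimately show ?thesis by simp
qed



lemma alt_sum: "(\<Sum>k\<in>{1..2*n}. (-1::int) ^ k * f k) = (\<Sum>i\<in>{1..n}. f (2*i)) - (\<Sum>i\<in>{1..n}. f (2*i - 1))"
proof (induction n)
  case 0 then show ?case by simp
next
  case (Suc n)
  have e: "{1..2 * Suc n} = insert (Suc (Suc (2*n))) (insert (Suc (2*n)) {1..2*n})" by auto
  show ?case using Suc by (simp add: e)
qed

definition Tsum :: "ev list \<Rightarrow> (nat \<Rightarrow> bool) \<Rightarrow> int" where
  "Tsum w sg = (\<Sum>i<length w. (-1) ^ bars_before w i * passage_val sg (w ! i))"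

lemma S_dvd_T:
  assumes wf: "wf_twisted w" and ev: "even (nbars w)"
  shows "S_inv w sg dvd Tsum w sg"
proof (cases "nbars w = 0")
  case True
  then have "bars_before w i = 0" for i using bb_le[of w i] by simp
  then show ?thesis using zero_sum[OF wf, of sg] by (simp add: Tsum_def)
next
  case False
  let ?nb = "nbars w"
  let ?P = "{i. i < length w \<and> w ! i \<noteq> Bar}"
  let ?f = "\<lambda>i. (-1::int) ^ edge_of w i * passage_val sg (w ! i)"
  have pow: "(-1::int) ^ bars_before w i = (-1) ^ edge_of w i" for i
    using ev by (simp add: edge_of_def)
  have "Tsum w sg = (\<Sum>i<length w. ?f i)" by (simp add: Tsum_def pow)
  also have "\<dots> = (\<Sum>i\<in>?P. ?f i)"
    by (rule sum.mono_neutral_right) (auto simp: passage_val_def)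
  also have "\<dots> = (\<Sum>k\<in>{1..?nb}. \<Sum>i\<in>{x. x \<in> ?P \<and> edge_of w x = k}. ?f i)"
  proof (rule sum.group[symmetric])
    show "finite ?P" by simp
    show "finite {1..?nb}" by simp
    show "edge_of w ` ?P \<subseteq> {1..?nb}"
      using False bb_le[of w] by (auto simp: edge_of_def)
  qed
  also have "\<dots> = (\<Sum>k\<in>{1..?nb}. (-1) ^ k * s_edge w sg k)"
  proof (rule sum.cong[OF refl])
    fix k assume "k \<in> {1..?nb}"
    have "(\<Sum>i\<in>{x. x \<in> ?P \<and> edge_of w x = k}. ?f i) =
          (\<Sum>i\<in>{x. x \<in> ?P \<and> edge_of w x = k}. (-1) ^ k * passage_val sg (w ! i))"
      by (rule sum.cong) auto
    also have "\<dots> = (-1) ^ k * s_edge w sg k"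
      by (simp add: s_edge_def sum_distrib_left conj_assoc)
    finally show "(\<Sum>i\<in>{x. x \<in> ?P \<and> edge_of w x = k}. ?f i) = (-1) ^ k * s_edge w sg k" .
  qed
  also have "\<dots> = (\<Sum>i\<in>{1..?nb div 2}. s_edge w sg (2*i)) - (\<Sum>i\<in>{1..?nb div 2}. s_edge w sg (2*i - 1))"
    using alt_sum[where n="?nb div 2" and f="s_edge w sg"] ev by simp
  finally have "Tsum w sg = - ((\<Sum>i\<in>{1..?nb div 2}. s_edge w sg (2*i - 1)) - (\<Sum>i\<in>{1..?nb div 2}. s_edge w sg (2*i)))"
    by simp
  moreover have "\<bar>a - b\<bar> dvd - (a - b)" for a b :: int by (metis abs_dvd_iff dvd_minus_iff dvd_refl)
  ultimately show ?thesis using False unfolding S_inv_def by presburger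
qed



lemma cong_shift: "[a = b + k] (mod m) \<longleftrightarrow> [b = a + - k] (mod (m::int))"
proof -
  have "b - (a + - k) = - (a - (b + k))" by simp
  then show ?thesis by (simp only: cong_iff_dvd_diff dvd_minus_iff)
qed

lemma seg_in_0: "w \<noteq> [] \<Longrightarrow> seg_in w 0 = length w - 1"
  by (simp add: seg_in_def)
lemma seg_in_Suc: "Suc j < length w \<Longrightarrow> seg_in w (Suc j) = j"
  by (simp add: seg_in_def)
lemma seg_in_lt: "w \<noteq> [] \<Longrightarrow> seg_in w j < length w"
  by (simp add: seg_in_def)

lemma val_last:
  assumes ev: "even (nbars w)" and ne: "w \<noteq> []"
  shows "val w sg x (length w - 1) = x + Tsum w sg"
proof -
  have L: "Suc (length w - 1) = length w" using ne by simp
  have "val w sg x (length w - 1) = (-1) ^ bars_before w (length w) * x + val w sg 0 (length w - 1)"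
    using val_affine[of "length w - 1" w sg x] ne L by simp
  also have "val w sg 0 (length w - 1) = (-1) ^ bars_before w (length w) * (\<Sum>i\<le>length w - 1. (-1) ^ bars_before w i * passage_val sg (w ! i))"
    using val0_T[of "length w - 1" w sg] ne L by simp
  also have "{..length w - 1} = {..<length w}" using ne by (cases w) auto
  finally show ?thesis using ev by (simp add: bb_len Tsum_def)
qed

lemma partner_under:
  assumes "wf_twisted w" "p < length w" "w ! p = OverP c"
  shows "\<exists>q<length w. w ! q = UnderP c"
proof -
  have "OverP c \<in> set w" using assms by (metis nth_mem)
  then have "count_list w (OverP c) \<noteq> 0" by (simp add: count_list_0_iff)
  then have "count_list w (UnderP c) \<noteq> 0" using assms(1) by (simp add: wf_twisted_def)
  then have "UnderP c \<in> set w" by (simp add: count_list_0_iff)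
  then show ?thesis by (simp add: in_set_conv_nth)
qed

lemma partner_over:
  assumes "wf_twisted w" "q < length w" "w ! q = UnderP c"
  shows "\<exists>p<length w. w ! p = OverP c"
proof -
  have "UnderP c \<in> set w" using assms by (metis nth_mem)
  then have "count_list w (UnderP c) \<noteq> 0" by (simp add: count_list_0_iff)
  then have "count_list w (OverP c) \<noteq> 0" using assms(1) by (simp add: wf_twisted_def)
  then have "OverP c \<in> set w" by (simp add: count_list_0_iff)
  then show ?thesis by (simp add: in_set_conv_nth)
qed

lemma coloring_iff:
  assumes wf: "wf_twisted w"
  shows "coloring w sg F \<longleftrightarrow>
    (\<forall>j<length w. [F j = stepf sg (w ! j) (F (seg_in w j))] (mod S_inv w sg))"
    (is "?L \<longleftrightarrow> ?R")
proof
  assume col: ?L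
  show ?R
  proof (intro allI impI)
    fix j assume j: "j < length w"
    show "[F j = stepf sg (w ! j) (F (seg_in w j))] (mod S_inv w sg)"
    proof (cases "w ! j")
      case Bar then show ?thesis using col j by (simp add: coloring_def stepf_def)
    next
      case (OverP c)
      obtain q where q: "q < length w" "w ! q = UnderP c" using partner_under[OF wf j OverP] by blast
      show ?thesis using col j q OverP
        by (auto simp: coloring_def stepf_def passage_val_def cong_shift split: if_splits)
    next
      case (UnderP c)
      obtain p where p: "p < length w" "w ! p = OverP c" using partner_over[OF wf j UnderP] by blast
      show ?thesis using col j p UnderP
        by (auto simp: coloring_def stepf_def passage_val_def cong_shift split: if_splits)
    qed
  qed
next
  assume R: ?R
  show ?L unfolding coloring_def
  proof (intro conjI allI impI)
    fix j assume "j < length w" "w ! j = Bar"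
    then show "[F j = - F (seg_in w j)] (mod S_inv w sg)" using R by (force simp: stepf_def)
  next
    fix c p q assume pq: "p < length w" "q < length w" "w ! p = OverP c" "w ! q = UnderP c"
    have Rp: "[F p = F (seg_in w p) + passage_val sg (OverP c)] (mod S_inv w sg)"
      using R pq by (force simp: stepf_def)
    have Rq: "[F q = F (seg_in w q) + passage_val sg (UnderP c)] (mod S_inv w sg)"
      using R pq by (force simp: stepf_def)
    show "if sg c then [F q = F (seg_in w q) + 1] (mod S_inv w sg) \<and> [F (seg_in w p) = F p + 1] (mod S_inv w sg)
         else [F (seg_in w q) = F q + 1] (mod S_inv w sg) \<and> [F p = F (seg_in w p) + 1] (mod S_inv w sg)"
      using Rp Rq by (auto simp: passage_val_def cong_shift)
  qed
qed



lemma col_val: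
  assumes wf: "wf_twisted w" and col: "coloring w sg F"
  shows "j < length w \<Longrightarrow> [F j = val w sg (F (length w - 1)) j] (mod S_inv w sg)"
proof (induction j)
  case 0
  have ne: "w \<noteq> []" using 0 by auto
  have "[F 0 = stepf sg (w ! 0) (F (seg_in w 0))] (mod S_inv w sg)"
    using col 0 coloring_iff[OF wf] by blast
  then show ?case using ne by (simp add: seg_in_0)
next
  case (Suc j)
  have "[F (Suc j) = stepf sg (w ! Suc j) (F j)] (mod S_inv w sg)"
    using col Suc.prems coloring_iff[OF wf] seg_in_Suc[OF Suc.prems] by metis
  moreover have "[stepf sg (w ! Suc j) (F j) = stepf sg (w ! Suc j) (val w sg (F (length w - 1)) j)] (mod S_inv w sg)"
    using Suc by (intro stepf_cong) simp
  ultimately show ?case by (simp add: cong_trans)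
qed

lemma val_coloring:
  assumes wf: "wf_twisted w" and ev: "even (nbars w)" and ne: "w \<noteq> []"
  shows "coloring w sg (val w sg x)"
  unfolding coloring_iff[OF wf]
proof (intro allI impI)
  fix j assume j: "j < length w"
  show "[val w sg x j = stepf sg (w ! j) (val w sg x (seg_in w j))] (mod S_inv w sg)"
  proof (cases j)
    case 0
    have "[x = val w sg x (length w - 1)] (mod S_inv w sg)"
      using val_last[OF ev ne] S_dvd_T[OF wf ev, of sg]
      by (simp add: cong_iff_dvd_diff)
    then have "[stepf sg (w ! 0) x = stepf sg (w ! 0) (val w sg x (length w - 1))] (mod S_inv w sg)"
      by (rule stepf_cong)
    then show ?thesis using 0 ne by (simp add: seg_in_0)
  next
    case (Suc k)
    then show ?thesis using j by (simp add: seg_in_Suc)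
  qed
qed

lemma col_p:
  assumes wf: "wf_twisted w" and col: "coloring w sg F" and j: "j < length w" and nb: "w ! j \<noteq> Bar"
  shows "[F j = (-1) ^ bars_before w j * F (length w - 1) + val w sg 0 j] (mod S_inv w sg)"
  using col_val[OF wf col j] val_affine[OF j, of sg "F (length w - 1)"] bb_Suc[OF j] nb by simp

lemma col_seg:
  assumes wf: "wf_twisted w" and ev: "even (nbars w)" and col: "coloring w sg F" and j: "j < length w"
  shows "[F (seg_in w j) = (-1) ^ bars_before w j * F (length w - 1) + val w sg 0 (seg_in w j)] (mod S_inv w sg)"
proof (cases j)
  case 0
  have ne: "w \<noteq> []" using j by auto
  have "val w sg 0 (length w - 1) = Tsum w sg" using val_last[OF ev ne, of sg 0] by simp
  then have "[F (length w - 1) = F (length w - 1) + val w sg 0 (length w - 1)] (mod S_inv w sg)"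
    using S_dvd_T[OF wf ev, of sg] by (simp add: cong_iff_dvd_diff)
  then show ?thesis using 0 ne by (simp add: seg_in_0)
next
  case (Suc k)
  have k: "k < length w" using j Suc by simp
  show ?thesis using col_val[OF wf col k] val_affine[OF k, of sg "F (length w - 1)"] Suc j
    by (simp add: seg_in_Suc)
qed

definition Cc :: "ev list \<Rightarrow> (nat \<Rightarrow> bool) \<Rightarrow> nat \<Rightarrow> nat \<Rightarrow> nat \<Rightarrow> int" where
  "Cc w sg c p q = (if sg c then val w sg 0 p - val w sg 0 (seg_in w q) else val w sg 0 (seg_in w p) - val w sg 0 q)"

lemma ind_formula:
  assumes wf: "wf_twisted w" and ev: "even (nbars w)" and col: "coloring w sg F"
    and p: "p < length w" "w ! p = OverP c" and q: "q < length w" "w ! q = UnderP c"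
  shows "ind w sg F c p q = (((-1) ^ bars_before w p - (-1) ^ bars_before w q) * F (length w - 1) + Cc w sg c p q) mod S_inv w sg"
proof -
  let ?x = "F (length w - 1)"
  have P: "[F p = (-1) ^ bars_before w p * ?x + val w sg 0 p] (mod S_inv w sg)"
    using col_p[OF wf col p(1)] p by simp
  have Q: "[F q = (-1) ^ bars_before w q * ?x + val w sg 0 q] (mod S_inv w sg)"
    using col_p[OF wf col q(1)] q by simp
  have SP: "[F (seg_in w p) = (-1) ^ bars_before w p * ?x + val w sg 0 (seg_in w p)] (mod S_inv w sg)"
    using col_seg[OF wf ev col p(1)] .
  have SQ: "[F (seg_in w q) = (-1) ^ bars_before w q * ?x + val w sg 0 (seg_in w q)] (mod S_inv w sg)"
    using col_seg[OF wf ev col q(1)] .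
  show ?thesis
  proof (cases "sg c")
    case True
    have "[F p - F (seg_in w q) = ((-1) ^ bars_before w p * ?x + val w sg 0 p) - ((-1) ^ bars_before w q * ?x + val w sg 0 (seg_in w q))] (mod S_inv w sg)"
      using P SQ by (rule cong_diff)
    then show ?thesis using True by (simp add: ind_def Cc_def cong_def algebra_simps)
  next
    case False
    have "[F (seg_in w p) - F q = ((-1) ^ bars_before w p * ?x + val w sg 0 (seg_in w p)) - ((-1) ^ bars_before w q * ?x + val w sg 0 q)] (mod S_inv w sg)"
      using SP Q by (rule cong_diff)
    then show ?thesis using False by (simp add: ind_def Cc_def cong_def algebra_simps)
  qed
qed



lemma bb_between:
  assumes ab: "a < b" and bL: "b \<le> length w" and nb: "w ! a \<noteq> Bar"
  shows "bars_before w b = bars_before w a + card {j. a < j \<and> j < b \<and> j < length w \<and> w ! j = Bar}"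
proof -
  have "Suc a \<le> b" using ab by simp
  then show ?thesis using bL
  proof (induction b rule: dec_induct)
    case base
    have "{j. a < j \<and> j < Suc a \<and> j < length w \<and> w ! j = Bar} = {}" by auto
    then show ?case using bb_Suc[of a w] base nb by simp
  next
    case (step n)
    have n: "n < length w" using step by simp
    have IH: "bars_before w n = bars_before w a + card {j. a < j \<and> j < n \<and> j < length w \<and> w ! j = Bar}"
      using step by simp
    show ?case
    proof (cases "w ! n = Bar")
      case True
      have e: "{j. a < j \<and> j < Suc n \<and> j < length w \<and> w ! j = Bar} = insert n {j. a < j \<and> j < n \<and> j < length w \<and> w ! j = Bar}"
        using True step n by auto
      show ?thesis using IH True bb_Suc[OF n] by (simp add: e)
    next
      case False
      have e: "{j. a < j \<and> j < Suc n \<and> j < length w \<and> w ! j = Bar} = {j. a < j \<and> j < n \<and> j < length w \<and> w ! j = Bar}"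
        using False by (auto simp: less_Suc_eq)
      show ?thesis using IH False bb_Suc[OF n] by (simp add: e)
    qed
  qed
qed

lemma pos_unique:
  assumes "count_list w x \<le> 1" "i < length w" "j < length w" "w ! i = x" "w ! j = x"
  shows "i = j"
proof (rule ccontr)
  assume ne: "i \<noteq> j"
  have c: "count_list w x = card {k. k < length w \<and> x = w ! k}"
    by (simp add: count_list_eq_length_filter length_filter_conv_card)
  have "{i, j} \<subseteq> {k. k < length w \<and> x = w ! k}" using assms by auto
  then have "card {i, j} \<le> card {k. k < length w \<and> x = w ! k}" by (intro card_mono) auto
  then show False using ne c assms(1) by simp
qed

lemma sign_diff:
  assumes p: "p < length w" "w ! p = OverP c" and q: "q < length w" "w ! q = UnderP c"
  shows "(even (bars_between w p q) \<longrightarrow> (-1::int) ^ bars_before w p - (-1) ^ bars_before w q = 0)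
       \<and> (odd (bars_between w p q) \<longrightarrow> ((-1::int) ^ bars_before w p - (-1) ^ bars_before w q = 2 \<or>
                                          (-1::int) ^ bars_before w p - (-1) ^ bars_before w q = -2))"
proof -
  have pq: "p \<noteq> q" using p q by auto
  obtain k where k: "(bars_before w p = bars_before w q + k \<or> bars_before w q = bars_before w p + k)"
    and kb: "k = bars_between w p q"
  proof (cases "p < q")
    case True
    then show ?thesis using that bb_between[OF True, of w] q p by (simp add: bars_between_def)
  next
    case False
    then have "q < p" using pq by simp
    then show ?thesis using that bb_between[OF \<open>q < p\<close>, of w] q p by (simp add: bars_between_def)
  qed
  have ev: "(-1::int) ^ n = (if even n then 1 else -1)" for n by simp
  show ?thesis using k unfolding kb[symmetric] ev by auto
qed



lemma set_pm2:
  fixes \<alpha> C S :: int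
  assumes "\<alpha> = 2 \<or> \<alpha> = -2"
  shows "{(\<alpha> * x + C) mod S | x. True} = {r mod S | r. (even r \<longleftrightarrow> even C)}"
proof (intro equalityI subsetI)
  fix y assume "y \<in> {(\<alpha> * x + C) mod S | x. True}"
  then obtain x where "y = (\<alpha> * x + C) mod S" by blast
  moreover have "even (\<alpha> * x + C) \<longleftrightarrow> even C" using assms by auto
  ultimately show "y \<in> {r mod S | r. (even r \<longleftrightarrow> even C)}" by blast
next
  fix y assume "y \<in> {r mod S | r. (even r \<longleftrightarrow> even C)}"
  then obtain r where r: "y = r mod S" "even r \<longleftrightarrow> even C" by blast
  then have "even (r - C)" by auto
  then obtain m where m: "r - C = 2 * m" by (elim evenE)
  show "y \<in> {(\<alpha> * x + C) mod S | x. True}"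
  proof (cases "\<alpha> = 2")
    case True
    then have "r = \<alpha> * m + C" using m by simp
    then show ?thesis using r by blast
  next
    case False
    then have "r = \<alpha> * (-m) + C" using m assms by simp
    then show ?thesis using r by blast
  qed
qed

theorem lemma7p7:
  fixes w :: "ev list" and sg :: "nat \<Rightarrow> bool" and c p q :: nat
  assumes "wf_twisted w" and "even (nbars w)"
    and "p < length w" and "q < length w" and "w ! p = OverP c" and "w ! q = UnderP c"
  shows "(c \<in> C_e w \<longrightarrow>
            (\<forall>F G. coloring w sg F \<longrightarrow> coloring w sg G \<longrightarrow> ind w sg F c p q = ind w sg G c p q))
       \<and> (c \<in> C_o w \<longrightarrow>
            ({ind w sg F c p q | F. coloring w sg F} = {r mod S_inv w sg | r. even r}
           \<or> {ind w sg F c p q | F. coloring w sg F} = {r mod S_inv w sg | r. odd r}))"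
proof -
  note wf = assms(1) and ev = assms(2) and p = assms(3,5) and q = assms(4,6)
  have ne: "w \<noteq> []" using p by auto
  define \<alpha> where "\<alpha> = (-1::int) ^ bars_before w p - (-1) ^ bars_before w q"
  define C where "C = Cc w sg c p q"
  define S where "S = S_inv w sg"
  have key: "ind w sg F c p q = (\<alpha> * F (length w - 1) + C) mod S" if "coloring w sg F" for F
    using ind_formula[OF wf ev that p q] unfolding \<alpha>_def C_def S_def .
  have ex: "coloring w sg (val w sg x) \<and> ind w sg (val w sg x) c p q = (\<alpha> * x + C) mod S" for x
  proof
    show col: "coloring w sg (val w sg x)" using val_coloring[OF wf ev ne] .
    have "[\<alpha> * val w sg x (length w - 1) + C = \<alpha> * x + C] (mod S)"
      using val_last[OF ev ne, of sg x] S_dvd_T[OF wf ev, of sg]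
      by (simp add: cong_iff_dvd_diff S_def algebra_simps)
    then show "ind w sg (val w sg x) c p q = (\<alpha> * x + C) mod S"
      using key[OF col] by (simp add: cong_def)
  qed
  have setq: "{ind w sg F c p q | F. coloring w sg F} = {(\<alpha> * x + C) mod S | x. True}"
  proof (intro equalityI subsetI)
    fix y assume "y \<in> {ind w sg F c p q | F. coloring w sg F}"
    then obtain F where "coloring w sg F" "y = ind w sg F c p q" by blast
    then show "y \<in> {(\<alpha> * x + C) mod S | x. True}" using key by blast
  next
    fix y assume "y \<in> {(\<alpha> * x + C) mod S | x. True}"
    then obtain x where "y = (\<alpha> * x + C) mod S" by blast
    then have "y = ind w sg (val w sg x) c p q" using ex[of x] by simp
    then show "y \<in> {ind w sg F c p q | F. coloring w sg F}" using ex[of x] by blast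
  qed
  have uniq: "p' = p \<and> q' = q" if "p' < length w" "q' < length w" "w ! p' = OverP c" "w ! q' = UnderP c" for p' q'
  proof -
    have "count_list w (OverP c) \<le> 1" "count_list w (UnderP c) \<le> 1" using wf unfolding wf_twisted_def by (metis)+
    then show ?thesis using pos_unique[of w "OverP c" p' p] pos_unique[of w "UnderP c" q' q] that p q by simp
  qed
  show ?thesis
  proof (intro conjI impI allI)
    fix F G assume ce: "c \<in> C_e w" and F: "coloring w sg F" and G: "coloring w sg G"
    then have "even (bars_between w p q)" using uniq by (auto simp: C_e_def)
    then have "\<alpha> = 0" using sign_diff[OF p q] unfolding \<alpha>_def by blast
    then show "ind w sg F c p q = ind w sg G c p q" using key[OF F] key[OF G] by simp
  next
    assume co: "c \<in> C_o w"
    then have "odd (bars_between w p q)" using uniq by (auto simp: C_o_def)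
    then have a2: "\<alpha> = 2 \<or> \<alpha> = -2" using sign_diff[OF p q] unfolding \<alpha>_def by blast
    show "{ind w sg F c p q | F. coloring w sg F} = {r mod S_inv w sg | r. even r}
        \<or> {ind w sg F c p q | F. coloring w sg F} = {r mod S_inv w sg | r. odd r}"
    proof (cases "even C")
      case True
      then show ?thesis using setq set_pm2[OF a2, of C S] unfolding S_def by simp
    next
      case False
      then show ?thesis using setq set_pm2[OF a2, of C S] unfolding S_def by simp
    qed
  qed
qed

end
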